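(* Let $\Gamma=\{b_1q_1\overline{b_1'}=0,\dots,b_mq_m\overline{b_m'}=0\}\cup\{c_1\le c_1',\dots,c_n\le c_n'\}$ be a set of assumptions, with $q_i\in\Sigma$ and all $b_i,b_i',c_j,c_j'$ Boolean expressions. Let $u=(p_1+\cdots+p_k)^*$ where $\Sigma=\{p_1,\dots,p_k\}$, and $r=b_1q_1\overline{b_1'}+\cdots+b_mq_m\overline{b_m'}+c_1\overline{c_1'}+\cdots+c_n\overline{c_n'}$. Then for every KAT expression $e$, $\mathsf{GS}^\Gamma(e)=\mathsf{GS}(e)\setminus\mathsf{GS}(uru)$.
   Context: Let $\Sigma=\{p_1,\dots,p_k\}$ ($k\ge1$) be a finite set of action symbols and $T=\{t_1,\dots,t_l\}$ ($l\ge1$) a finite set of test symbols. Boolean expressions: $b::=0\mid 1\mid t\mid \overline{b}\mid b_1+b_2\mid b_1 b_2$; KAT expressions (syntactic terms): $e::=p\in\Sigma\mid b\mid e_1+e_2\mid e_1e_2\mid e^*$. $\mathsf{At}$ is the set of atoms (words $b_1\cdots b_l$ with $b_i\in\{t_i,\overline{t_i}\}$), identified with truth assignments to $T$; $\alpha\le b$ means $b$ is true under $\alpha$. Guarded strings: $\mathsf{GS}=(\mathsf{At}\cdot\Sigma)^*\cdot\mathsf{At}$. The fusion product $xy$ is defined only when the last atom of $x$ equals the first atom of $y$, and is the concatenation with one copy of that atom omitted; $X\diamond Y=\{xy\mid x\in X,y\in Y,xy\text{ defined}\}$, $X^0=\mathsf{At}$ in the definition of $\mathsf{GS}$, $X^{n+1}=X\diamond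 X^n$. $\mathsf{GS}(p)=\{\alpha p\beta\mid\alpha,\beta\in\mathsf{At}\}$; $\mathsf{GS}(b)=\{\alpha\in\mathsf{At}\mid\alpha\le b\}$; $\mathsf{GS}(e_1+e_2)=\mathsf{GS}(e_1)\cup\mathsf{GS}(e_2)$; $\mathsf{GS}(e_1e_2)=\mathsf{GS}(e_1)\diamond\mathsf{GS}(e_2)$; $\mathsf{GS}(e^* )=\bigcup_{n\ge0}\mathsf{GS}(e)^n$. Given $\Gamma$ as in the claim, $\mathsf{At}^\Gamma=\{\alpha\in\mathsf{At}\mid \alpha\le c\Rightarrow\alpha\le c'\text{ for all }(c\le c')\in\Gamma\}$. Guarded strings modulo $\Gamma$: $\mathsf{GS}^\Gamma(p)=\{\alpha p\beta\mid\alpha,\beta\in\mathsf{At}^\Gamma\text{ and for every assumption }bp\overline{b'}=0\text{ in }\Gamma\text{ (with this same }p),\ \alpha\le b\Rightarrow\beta\le b'\}$; $\mathsf{GS}^\Gamma(b)=\{\alpha\in\mathsf{At}^\Gamma\mid\alpha\le b\}$; $\mathsf{GS}^\Gamma(e_1+e_2)=\mathsf{GS}^\Gamma(e_1)\cup\mathsf{GS}^\Gamma(e_2)$; $\mathsf{GS}^\Gamma(e_1e_2)=\mathsf{GS}^\Gamma(e_1)\diamond\mathsf{GS}^\Gamma(e_2)$; $\mathsf{GS}^\Gamma(e^* )=\bigcup_{n\ge0}\mathsf{GS}^\Gamma(e)^n$, where here $X^0$ is taken to be $\mathsf{At}^\Gamma$. *)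

theory Defs
  imports Main
begin

datatype 't bexp = BZero | BOne | Test 't | Neg "'t bexp"
  | BPlus "'t bexp" "'t bexp" | BTimes "'t bexp" "'t bexp"

datatype ('p, 't) kat = Act 'p | B "'t bexp" | Plus "('p,'t) kat" "('p,'t) kat"
  | Times "('p,'t) kat" "('p,'t) kat" | Star "('p,'t) kat"

(* atoms = truth assignments to the test symbols *)
type_synonym 't atom = "'t \<Rightarrow> bool"

(* alpha \<le> b *)
fun beval :: "'t atom \<Rightarrow> 't bexp \<Rightarrow> bool" where
  "beval \<alpha> BZero = False"
| "beval \<alpha> BOne = True"
| "beval \<alpha> (Test t) = \<alpha> t"
| "beval \<alpha> (Neg b) = (\<not> beval \<alpha> b)"
| "beval \<alpha> (BPlus b1 b2) = (beval \<alpha> b1 \<or> beval \<alpha> b2)"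
| "beval \<alpha> (BTimes b1 b2) = (beval \<alpha> b1 \<and> beval \<alpha> b2)"

(* guarded string alpha0 p1 alpha1 ... pn alphan, represented as (alpha0, [(p1,alpha1),...,(pn,alphan)]) *)
type_synonym ('p,'t) gstring = "'t atom \<times> ('p \<times> 't atom) list"

definition first_atom :: "('p,'t) gstring \<Rightarrow> 't atom" where
  "first_atom x = fst x"

definition last_atom :: "('p,'t) gstring \<Rightarrow> 't atom" where
  "last_atom x = (if snd x = [] then fst x else snd (last (snd x)))"

(* fusion product (only meaningful when last_atom x = first_atom y) *)
definition fuse :: "('p,'t) gstring \<Rightarrow> ('p,'t) gstring \<Rightarrow> ('p,'t) gstring" where
  "fuse x y = (fst x, snd x @ snd y)"

definition diamond :: "('p,'t) gstring set \<Rightarrow> ('p,'t) gstring set \<Rightarrow> ('p,'t) gstring set" where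
  "diamond X Y = {fuse x y | x y. x \<in> X \<and> y \<in> Y \<and> last_atom x = first_atom y}"

fun gpow :: "'t atom set \<Rightarrow> ('p,'t) gstring set \<Rightarrow> nat \<Rightarrow> ('p,'t) gstring set" where
  "gpow A X 0 = {(\<alpha>, []) | \<alpha>. \<alpha> \<in> A}"
| "gpow A X (Suc n) = diamond X (gpow A X n)"

fun GS :: "('p,'t) kat \<Rightarrow> ('p,'t) gstring set" where
  "GS (Act p) = {(\<alpha>, [(p, \<beta>)]) | \<alpha> \<beta>. True}"
| "GS (B b) = {(\<alpha>, []) | \<alpha>. beval \<alpha> b}"
| "GS (Plus e1 e2) = GS e1 \<union> GS e2"
| "GS (Times e1 e2) = diamond (GS e1) (GS e2)"
| "GS (Star e) = (\<Union>n. gpow UNIV (GS e) n)"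

(* Gamma: H = list of (b, q, b') standing for  b q (not b') = 0,
          C = list of (c, c') standing for  c \<le> c' *)
definition AtG :: "('t bexp \<times> 't bexp) list \<Rightarrow> 't atom set" where
  "AtG C = {\<alpha>. \<forall>(c, c') \<in> set C. beval \<alpha> c \<longrightarrow> beval \<alpha> c'}"

fun GSG :: "('t bexp \<times> 'p \<times> 't bexp) list \<Rightarrow> ('t bexp \<times> 't bexp) list
            \<Rightarrow> ('p,'t) kat \<Rightarrow> ('p,'t) gstring set" where
  "GSG H C (Act p) = {(\<alpha>, [(p, \<beta>)]) | \<alpha> \<beta>. \<alpha> \<in> AtG C \<and> \<beta> \<in> AtG C \<and>
       (\<forall>(b, q, b') \<in> set H. q = p \<longrightarrow> beval \<alpha> b \<longrightarrow> beval \<beta> b')}"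
| "GSG H C (B b) = {(\<alpha>, []) | \<alpha>. \<alpha> \<in> AtG C \<and> beval \<alpha> b}"
| "GSG H C (Plus e1 e2) = GSG H C e1 \<union> GSG H C e2"
| "GSG H C (Times e1 e2) = diamond (GSG H C e1) (GSG H C e2)"
| "GSG H C (Star e) = (\<Union>n. gpow (AtG C) (GSG H C e) n)"

fun sum_list_kat :: "('p,'t) kat list \<Rightarrow> ('p,'t) kat" where
  "sum_list_kat [] = B BZero"
| "sum_list_kat [e] = e"
| "sum_list_kat (e # es) = Plus e (sum_list_kat es)"

definition r_exp :: "('t bexp \<times> 'p \<times> 't bexp) list \<Rightarrow> ('t bexp \<times> 't bexp) list \<Rightarrow> ('p,'t) kat" where
  "r_exp H C = sum_list_kat
     (map (\<lambda>(b, q, b'). Times (Times (B b) (Act q)) (B (Neg b'))) H @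
      map (\<lambda>(c, c'). B (BTimes c (Neg c'))) C)"

definition u_exp :: "'p list \<Rightarrow> ('p,'t) kat" where
  "u_exp ps = Star (sum_list_kat (map Act ps))"

end

theory Submission
  imports Defs
begin

fun lastat :: "'t atom \<Rightarrow> ('p \<times> 't atom) list \<Rightarrow> 't atom" where
  "lastat a [] = a"
| "lastat a ((p,b)#xs) = lastat b xs"

lemma last_atom_lastat: "last_atom (a, xs) = lastat a xs"
  by (induction xs arbitrary: a) (auto simp: last_atom_def)

lemma lastat_app: "lastat a (xs @ ys) = lastat (lastat a xs) ys"
  by (induction xs arbitrary: a) auto

definition stepok :: "('t bexp \<times> 'p \<times> 't bexp) list \<Rightarrow> 't atom \<Rightarrow> 'p \<Rightarrow> 't atom \<Rightarrow> bool" where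
  "stepok H a p b = (\<forall>(c, q, c') \<in> set H. q = p \<longrightarrow> beval a c \<longrightarrow> beval b c')"

fun goodl :: "('t bexp \<times> 'p \<times> 't bexp) list \<Rightarrow> ('t bexp \<times> 't bexp) list \<Rightarrow> 't atom \<Rightarrow> ('p \<times> 't atom) list \<Rightarrow> bool" where
  "goodl H C a [] = (a \<in> AtG C)"
| "goodl H C a ((p,b)#xs) = (a \<in> AtG C \<and> stepok H a p b \<and> goodl H C b xs)"

lemma goodl_hd: "goodl H C a ys \<Longrightarrow> a \<in> AtG C"
  by (cases ys) auto

lemma goodl_app: "goodl H C a (xs @ ys) = (goodl H C a xs \<and> goodl H C (lastat a xs) ys)"
  by (induction xs arbitrary: a) (auto dest: goodl_hd)

definition G :: "('t bexp \<times> 'p \<times> 't bexp) list \<Rightarrow> ('t bexp \<times> 't bexp) list \<Rightarrow> ('p,'t) gstring set" where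
  "G H C = {x. goodl H C (fst x) (snd x)}"

lemma diamond_G: "diamond (X \<inter> G H C) (Y \<inter> G H C) = diamond X Y \<inter> G H C"
proof
  show "diamond (X \<inter> G H C) (Y \<inter> G H C) \<subseteq> diamond X Y \<inter> G H C"
    by (auto simp: diamond_def G_def fuse_def goodl_app last_atom_lastat first_atom_def)
next
  show "diamond X Y \<inter> G H C \<subseteq> diamond (X \<inter> G H C) (Y \<inter> G H C)"
  proof
    fix x assume "x \<in> diamond X Y \<inter> G H C"
    then obtain y z where x: "x = fuse y z" "y \<in> X" "z \<in> Y" "last_atom y = first_atom z"
      and g: "goodl H C (fst x) (snd x)" by (auto simp: diamond_def G_def)
    obtain a ys where y: "y = (a, ys)" by fastforce
    obtain b zs where z: "z = (b, zs)" by fastforce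
    have "goodl H C a (ys @ zs)" using g x y z by (simp add: fuse_def)
    moreover have "lastat a ys = b" using x(4) y z by (simp add: last_atom_lastat first_atom_def)
    ultimately have "y \<in> G H C" "z \<in> G H C" using y z by (auto simp: G_def goodl_app)
    then show "x \<in> diamond (X \<inter> G H C) (Y \<inter> G H C)" using x unfolding diamond_def by blast
  qed
qed

lemma gpow_G: "gpow (AtG C) (X \<inter> G H C) n = gpow UNIV X n \<inter> G H C"
proof (induction n)
  case 0
  show ?case by (auto simp: G_def)
next
  case (Suc n)
  then show ?case using diamond_G[of X H C "gpow UNIV X n"] by simp
qed

lemma GSG_G: "GSG H C e = GS e \<inter> G H C"
proof (induction e)
  case (Act p)
  show ?case by (auto simp: G_def stepok_def)
next
  case (B b)
  show ?case by (auto simp: G_def)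
next
  case (Plus e1 e2)
  then show ?case by auto
next
  case (Times e1 e2)
  then show ?case by (simp add: diamond_G)
next
  case (Star e)
  then show ?case by (simp add: gpow_G)
qed

lemma diamondI: "x \<in> X \<Longrightarrow> y \<in> Y \<Longrightarrow> last_atom x = first_atom y \<Longrightarrow> fuse x y \<in> diamond X Y"
  unfolding diamond_def by blast

lemma GS_sum: "GS (sum_list_kat es) = \<Union>(GS ` set es)"
  by (induction es rule: sum_list_kat.induct) auto

lemma gpow_all_mem: "x \<in> gpow UNIV {(\<alpha>, [(p, \<beta>)]) | \<alpha> p \<beta>. True} n \<longleftrightarrow> length (snd x) = n"
proof (induction n arbitrary: x)
  case 0
  show ?case by (cases x) auto
next
  case (Suc n)
  show ?case
  proof
    assume "x \<in> gpow UNIV {(\<alpha>, [(p, \<beta>)]) | \<alpha> p \<beta>. True} (Suc n)"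
    then obtain y z where "x = fuse y z" "y \<in> {(\<alpha>, [(p, \<beta>)]) | \<alpha> p \<beta>. True}"
      "z \<in> gpow UNIV {(\<alpha>, [(p, \<beta>)]) | \<alpha> p \<beta>. True} n"
      unfolding gpow.simps diamond_def by blast
    then show "length (snd x) = Suc n" using Suc.IH by (auto simp: fuse_def)
  next
    assume "length (snd x) = Suc n"
    then obtain a p b xs where x: "x = (a, (p,b)#xs)" and l: "length xs = n"
      by (cases x; cases "snd x") auto
    have "(b, xs) \<in> gpow UNIV {(\<alpha>, [(p, \<beta>)]) | \<alpha> p \<beta>. True} n" using Suc.IH l by simp
    moreover have "x = fuse (a, [(p,b)]) (b, xs)" using x by (simp add: fuse_def)
    moreover have "last_atom (a, [(p,b)]) = first_atom (b, xs)"
      by (simp add: last_atom_def first_atom_def)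
    ultimately show "x \<in> gpow UNIV {(\<alpha>, [(p, \<beta>)]) | \<alpha> p \<beta>. True} (Suc n)"
      unfolding gpow.simps by (auto intro!: diamondI)
  qed
qed

lemma GS_u:
  fixes ps :: "'p list"
  assumes "set ps = UNIV" shows "(GS (u_exp ps) :: ('p,'t) gstring set) = UNIV"
proof -
  have S: "(GS (sum_list_kat (map Act ps)) :: ('p,'t) gstring set) = {(\<alpha>, [(p, \<beta>)]) | \<alpha> p \<beta>. True}"
    using assms by (auto simp: GS_sum)
  have "\<And>x::('p,'t) gstring. x \<in> gpow UNIV {(\<alpha>, [(p, \<beta>)]) | \<alpha> p \<beta>. True} (length (snd x))"
    by (rule gpow_all_mem[THEN iffD2]) simp
  then show ?thesis unfolding u_exp_def GS.simps S by blast
qed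

definition Rset :: "('t bexp \<times> 'p \<times> 't bexp) list \<Rightarrow> ('t bexp \<times> 't bexp) list \<Rightarrow> ('p,'t) gstring set" where
  "Rset H C = {(\<alpha>, zs). (zs = [] \<and> \<alpha> \<notin> AtG C) \<or> (\<exists>q \<beta>. zs = [(q,\<beta>)] \<and> \<not> stepok H \<alpha> q \<beta>)}"

lemma GS_hstep: "GS (Times (Times (B b) (Act q)) (B (Neg b'))) = {(\<alpha>, [(q, \<beta>)]) | \<alpha> \<beta>. beval \<alpha> b \<and> \<not> beval \<beta> b'}"
proof
  show "GS (Times (Times (B b) (Act q)) (B (Neg b'))) \<subseteq> {(\<alpha>, [(q, \<beta>)]) | \<alpha> \<beta>. beval \<alpha> b \<and> \<not> beval \<beta> b'}"
    by (auto simp: diamond_def fuse_def last_atom_def first_atom_def)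
next
  show "{(\<alpha>, [(q, \<beta>)]) | \<alpha> \<beta>. beval \<alpha> b \<and> \<not> beval \<beta> b'} \<subseteq> GS (Times (Times (B b) (Act q)) (B (Neg b')))"
  proof
    fix x assume "x \<in> {(\<alpha>, [(q, \<beta>)]) | \<alpha> \<beta>. beval \<alpha> b \<and> \<not> beval \<beta> b'}"
    then obtain a c where x: "x = (a, [(q,c)])" "beval a b" "\<not> beval c b'" by auto
    have 1: "(a, [(q,c)]) \<in> diamond (GS (B b)) (GS (Act q))"
      unfolding diamond_def using x
      by (auto simp: fuse_def last_atom_def first_atom_def intro!: exI[of _ "(a,[])"] exI[of _ "(a,[(q,c)])"])
    show "x \<in> GS (Times (Times (B b) (Act q)) (B (Neg b')))"
      unfolding GS.simps diamond_def using 1 x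
      by (auto simp: fuse_def last_atom_def first_atom_def intro!: exI[of _ "(a,[(q,c)])"] exI[of _ "(c,[])"])
  qed
qed

lemma GS_r: "GS (r_exp H C) = Rset H C"
proof -
  have h1: "GS \<circ> (\<lambda>(b, q, b'). Times (Times (B b) (Act q)) (B (Neg b'))) =
     (\<lambda>(b, q, b'). {(\<alpha>, [(q, \<beta>)]) | \<alpha> \<beta>. beval \<alpha> b \<and> \<not> beval \<beta> b'})"
    by (auto simp del: GS.simps simp: GS_hstep fun_eq_iff)
  have h2: "GS \<circ> (\<lambda>(c, c'). B (BTimes c (Neg c'))) = (\<lambda>(c, c'). {(\<alpha>, []) | \<alpha>. beval \<alpha> c \<and> \<not> beval \<alpha> c'})"
    by (auto simp: fun_eq_iff)
  have "GS (r_exp H C) = (\<Union>((GS \<circ> (\<lambda>(b, q, b'). Times (Times (B b) (Act q)) (B (Neg b')))) ` set H))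
     \<union> (\<Union>((GS \<circ> (\<lambda>(c, c'). B (BTimes c (Neg c')))) ` set C))"
    unfolding r_exp_def GS_sum by (simp add: image_comp)
  also have "\<dots> = Rset H C" unfolding h1 h2
    by (auto simp: Rset_def AtG_def stepok_def)
  finally show ?thesis .
qed

definition ib where
  "ib H C a xs = (\<exists>ys zs ws. xs = ys @ zs @ ws \<and> (lastat a ys, zs) \<in> Rset H C)"

lemma ib_iff: "ib H C a xs \<longleftrightarrow> \<not> goodl H C a xs"
proof (induction xs arbitrary: a)
  case Nil
  show ?case by (auto simp: ib_def Rset_def)
next
  case (Cons pb xs)
  obtain p b where pb: "pb = (p,b)" by fastforce
  have "ib H C a ((p,b)#xs) \<longleftrightarrow> (a \<notin> AtG C \<or> \<not> stepok H a p b \<or> ib H C b xs)"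
  proof
    assume "ib H C a ((p,b)#xs)"
    then obtain ys zs ws where e: "(p,b)#xs = ys @ zs @ ws" and r: "(lastat a ys, zs) \<in> Rset H C"
      unfolding ib_def by blast
    show "a \<notin> AtG C \<or> \<not> stepok H a p b \<or> ib H C b xs"
    proof (cases ys)
      case Nil
      then show ?thesis using e r by (auto simp: Rset_def)
    next
      case (Cons y ys')
      then have "y = (p,b)" "xs = ys' @ zs @ ws" using e by auto
      then have "ib H C b xs" using r Cons unfolding ib_def by auto
      then show ?thesis by simp
    qed
  next
    assume h: "a \<notin> AtG C \<or> \<not> stepok H a p b \<or> ib H C b xs"
    show "ib H C a ((p,b)#xs)"
    proof (cases "a \<notin> AtG C")
      case True
      then show ?thesis unfolding ib_def Rset_def
        by (intro exI[of _ "[]"] exI[of _ "[]"] exI[of _ "(p,b)#xs"]) auto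
    next
      case F: False
      show ?thesis
      proof (cases "stepok H a p b")
        case False
        then show ?thesis unfolding ib_def Rset_def
          by (intro exI[of _ "[]"] exI[of _ "[(p,b)]"] exI[of _ "xs"]) auto
      next
        case True
        with h F have "ib H C b xs" by simp
        then obtain ys zs ws where "xs = ys @ zs @ ws" "(lastat b ys, zs) \<in> Rset H C"
          unfolding ib_def by blast
        then show ?thesis unfolding ib_def
          by (intro exI[of _ "(p,b)#ys"] exI[of _ zs] exI[of _ ws]) auto
      qed
    qed
  qed
  then show ?case using Cons.IH pb by auto
qed

lemma diamond_bad: "x \<in> diamond (diamond UNIV R) UNIV \<longleftrightarrow>
   (\<exists>ys zs ws. snd x = ys @ zs @ ws \<and> (lastat (fst x) ys, zs) \<in> R)"
proof
  assume "x \<in> diamond (diamond UNIV R) UNIV"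
  then obtain v w y z where "x = fuse v w" "v = fuse y z" "z \<in> R" "last_atom y = first_atom z"
    unfolding diamond_def by blast
  then show "\<exists>ys zs ws. snd x = ys @ zs @ ws \<and> (lastat (fst x) ys, zs) \<in> R"
    by (intro exI[of _ "snd y"] exI[of _ "snd z"] exI[of _ "snd w"])
      (auto simp: fuse_def first_atom_def last_atom_lastat[symmetric])
next
  assume "\<exists>ys zs ws. snd x = ys @ zs @ ws \<and> (lastat (fst x) ys, zs) \<in> R"
  then obtain ys zs ws where e: "snd x = ys @ zs @ ws" and r: "(lastat (fst x) ys, zs) \<in> R" by blast
  define v where "v = fuse (fst x, ys) (lastat (fst x) ys, zs)"
  have v: "v \<in> diamond UNIV R" unfolding v_def diamond_def using r
    by (auto simp: last_atom_lastat first_atom_def)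
  have "x = fuse v (last_atom v, ws)" using e by (cases x) (simp add: v_def fuse_def)
  then show "x \<in> diamond (diamond UNIV R) UNIV"
    using diamondI[OF v, of "(last_atom v, ws)" UNIV] by (simp add: first_atom_def)
qed

theorem mainTheorem9:
  fixes ps :: "('p::finite) list"
    and H :: "(('t::finite) bexp \<times> 'p \<times> 't bexp) list"
    and C :: "('t bexp \<times> 't bexp) list"
    and e :: "('p, 't) kat"
  assumes "distinct ps" and "set ps = UNIV"
  shows "GSG H C e = GS e - GS (Times (Times (u_exp ps) (r_exp H C)) (u_exp ps))"
proof -
  have "GS (Times (Times (u_exp ps) (r_exp H C)) (u_exp ps)) = diamond (diamond UNIV (Rset H C)) UNIV"
  proof -
    have U: "(GS (u_exp ps) :: ('p,'t) gstring set) = UNIV" by (rule GS_u[OF assms(2)])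
    show ?thesis by (simp only: GS.simps U GS_r)
  qed
  then have "\<And>x. x \<in> GS (Times (Times (u_exp ps) (r_exp H C)) (u_exp ps)) \<longleftrightarrow> ib H C (fst x) (snd x)"
    by (simp only: diamond_bad ib_def)
  then have "\<And>x. x \<in> GS (Times (Times (u_exp ps) (r_exp H C)) (u_exp ps)) \<longleftrightarrow> x \<notin> G H C"
    by (simp add: ib_iff G_def)
  then show ?thesis using GSG_G[of H C e] by blast
qed

end
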